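(* Let $0<\beta<1$, let $p>0$, and let $u\in W^{1,1}[-p,p]$ be a nonnegative real-valued function with $u(-p)=u(p)=0$. Define $$L=\int_{-p}^p\sqrt{1+u'(x)^2}\,dx,\qquad A=\int_{-p}^p u(x)\,dx.$$ Then $$L\ \ge\ \Big(\frac{\arccos\beta}{\sqrt{1-\beta^2}}+\beta\Big)p+\sqrt{1-\beta^2}\,\frac{A}{p},$$ with equality if and only if $u(x)=\sqrt{R^2-x^2}-\beta R$ on $[-p,p]$, where $R=\dfrac{p}{\sqrt{1-\beta^2}}$.
   Context: $W^{1,1}[-p,p]$ denotes the Sobolev space of integrable functions on $[-p,p]$ with integrable weak derivative; such functions are absolutely continuous, so the endpoint values $u(\pm p)$ are well defined. *)

theory Defs
  imports "HOL-Analysis.Analysis"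
begin

text \<open>Membership of u in W^{1,1}[-p,p] with weak derivative g, expressed via the
absolutely continuous representative: g is Lebesgue integrable on [-p,p] and
u is the indefinite integral of g (this is the standard characterization of
W^{1,1} on a bounded interval).\<close>
definition W11_with_deriv :: "real \<Rightarrow> (real \<Rightarrow> real) \<Rightarrow> (real \<Rightarrow> real) \<Rightarrow> bool" where
  "W11_with_deriv p u g \<longleftrightarrow>
     g absolutely_integrable_on {-p..p} \<and>
     (\<forall>x\<in>{-p..p}. u x = u (-p) + integral {-p..x} g)"

end

theory Submission
  imports Defs "HOL-Analysis.Radon_Nikodym"
begin


lemma AE_lborel_negl:
  assumes "AE x in lborel. P x"
  obtains N where "negligible N" "\<And>x. x \<notin> N \<Longrightarrow> P x"
proof -
  obtain N where N: "\<And>x. x \<in> space lborel - N \<Longrightarrow> P x" "N \<in> null_sets lborel"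
    using AE_E3[OF assms] by blast
  have "negligible N" using N(2) null_sets_completionI negligible_iff_null_sets by blast
  then show ?thesis using that N(1) by auto
qed

lemma borel_rep:
  fixes g :: "real \<Rightarrow> real"
  assumes "g absolutely_integrable_on {a..b}"
  obtains g0 N where "g0 \<in> borel_measurable borel" "integrable lborel g0" "negligible N"
    "\<And>x. x \<notin> {a..b} \<Longrightarrow> g0 x = 0" "\<And>x. x \<in> {a..b} \<Longrightarrow> x \<notin> N \<Longrightarrow> g0 x = g x"
proof -
  define G where "G = (\<lambda>x. indicator {a..b} x *\<^sub>R g x)"
  have iG: "integrable lebesgue G" using assms unfolding G_def set_integrable_def by simp
  then have "G \<in> borel_measurable (completion lborel)" by auto
  then obtain g1 where g1: "g1 \<in> borel_measurable lborel" "AE x in lborel. G x = g1 x"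
    using completion_ex_borel_measurable_real by blast
  define g0 where "g0 = (\<lambda>x. indicator {a..b} x * g1 x)"
  have mg0: "g0 \<in> borel_measurable borel" using g1(1) unfolding g0_def by simp
  have ae: "AE x in lborel. G x = g0 x" using g1(2)
    by eventually_elim (auto simp: G_def g0_def indicator_def of_bool_def split: if_splits)
  have "integrable lebesgue g0"
  proof (rule integrable_cong_AE_imp[OF iG _ AE_completion[OF ae]])
    show "g0 \<in> borel_measurable lebesgue" using mg0 by (simp add: measurable_completion)
  qed
  then have ig0: "integrable lborel g0" using integrable_completion[of g0 lborel] mg0 by simp
  obtain N where N: "negligible N" "\<And>x. x \<notin> N \<Longrightarrow> G x = g0 x" using AE_lborel_negl[OF ae] by blast
  show ?thesis
  proof (rule that[OF mg0 ig0 N(1)])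
    fix x assume "x \<notin> {a..b}" then show "g0 x = 0" by (simp add: g0_def)
  next
    fix x assume "x \<in> {a..b}" "x \<notin> N" then show "g0 x = g x" using N(2)[of x] by (simp add: G_def)
  qed
qed

lemma hk_lint:
  fixes g0 :: "real \<Rightarrow> real"
  assumes "g0 \<in> borel_measurable borel" "integrable lborel g0" "S \<in> sets borel"
  shows "set_integrable lborel S g0" "(LINT x:S|lborel. g0 x) = integral S g0" "g0 integrable_on S"
proof -
  show si: "set_integrable lborel S g0" unfolding set_integrable_def
    using assms by (intro integrable_mult_indicator) auto
  show "(LINT x:S|lborel. g0 x) = integral S g0" "g0 integrable_on S"
    using set_borel_integral_eq_integral[OF si] by auto
qed

lemma zero_from_intervals:
  fixes g0 :: "real \<Rightarrow> real"
  assumes mg: "g0 \<in> borel_measurable borel" and ig: "integrable lborel g0"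
    and out: "\<And>x. x \<notin> {a..b} \<Longrightarrow> g0 x = 0" and ab: "a \<le> b"
    and int0: "\<And>x. x \<in> {a..b} \<Longrightarrow> integral {a..x} g0 = 0"
  shows "AE x in lborel. g0 x = 0"
proof -
  have g0eq: "g0 = (\<lambda>x. if x \<in> {a..b} then g0 x else 0)" using out by auto
  have intab: "g0 integrable_on {a..b}" using hk_lint[OF mg ig] by simp
  have ic: "integral {c<..} g0 = 0" for c
  proof -
    have "integral {c<..} g0 = integral ({c<..} \<inter> {a..b}) g0"
      using Henstock_Kurzweil_Integration.integral_restrict_Int[of "{c<..}" "{a..b}" g0] g0eq
      by (metis Int_commute)
    also have "\<dots> = 0"
    proof (cases "c < a")
      case True
      then have "{c<..} \<inter> {a..b} = {a..b}" by auto
      then show ?thesis using int0[of b] ab by simp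
    next
      case False
      show ?thesis
      proof (cases "b \<le> c")
        case True
        then have "{c<..} \<inter> {a..b} = {}" by auto
        then show ?thesis by simp
      next
        case False2: False
        have e: "{c<..} \<inter> {a..b} = {c<..b}" using False by auto
        have "integral {c<..b} g0 = integral {c..b} g0"
          by (rule integral_spike_set) (auto intro: negligible_subset[of "{c}"])
        moreover have "integral {a..c} g0 + integral {c..b} g0 = integral {a..b} g0"
          using False False2 intab by (intro Henstock_Kurzweil_Integration.integral_combine) (auto simp: not_less)
        moreover have "integral {a..c} g0 = 0" "integral {a..b} g0 = 0"
          using False False2 ab int0 by auto
        ultimately show ?thesis using e by simp
      qed
    qed
    finally show ?thesis .
  qed
  define P where "P x = max 0 (g0 x)" for x
  define Q where "Q x = max 0 (- g0 x)" for x
  have mP: "P \<in> borel_measurable borel" "Q \<in> borel_measurable borel" using mg unfolding P_def Q_def by auto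
  have iP: "integrable lborel P" "integrable lborel Q" using ig unfolding P_def Q_def by auto
  have em: "emeasure (density lborel (\<lambda>x. ennreal (g0 x))) {c<..} =
      emeasure (density lborel (\<lambda>x. ennreal (- g0 x))) {c<..}"
    and fin: "emeasure (density lborel (\<lambda>x. ennreal (g0 x))) {c<..} < \<infinity>" for c
  proof -
    have ipc: "integrable lborel (\<lambda>x. indicator {c<..} x * P x)" "integrable lborel (\<lambda>x. indicator {c<..} x * Q x)"
      using integrable_mult_indicator[OF _ iP(1), of "{c<..}"] integrable_mult_indicator[OF _ iP(2), of "{c<..}"] by auto
    have 1: "emeasure (density lborel (\<lambda>x. ennreal (g0 x))) {c<..} =
        ennreal (\<integral>x. indicator {c<..} x * P x \<partial>lborel)"
    proof -
      have "emeasure (density lborel (\<lambda>x. ennreal (g0 x))) {c<..} = (\<integral>\<^sup>+x. ennreal (g0 x) * indicator {c<..} x \<partial>lborel)"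
        by (subst emeasure_density) (use mg in auto)
      also have "\<dots> = (\<integral>\<^sup>+x. ennreal (indicator {c<..} x * P x) \<partial>lborel)"
        by (intro nn_integral_cong) (auto simp: P_def indicator_def max_def ennreal_neg)
      also have "\<dots> = ennreal (\<integral>x. indicator {c<..} x * P x \<partial>lborel)"
        by (rule nn_integral_eq_integral) (use ipc in \<open>auto simp: P_def\<close>)
      finally show ?thesis .
    qed
    have 2: "emeasure (density lborel (\<lambda>x. ennreal (- g0 x))) {c<..} =
        ennreal (\<integral>x. indicator {c<..} x * Q x \<partial>lborel)"
    proof -
      have "emeasure (density lborel (\<lambda>x. ennreal (- g0 x))) {c<..} = (\<integral>\<^sup>+x. ennreal (- g0 x) * indicator {c<..} x \<partial>lborel)"
        by (subst emeasure_density) (use mg in auto)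
      also have "\<dots> = (\<integral>\<^sup>+x. ennreal (indicator {c<..} x * Q x) \<partial>lborel)"
        by (intro nn_integral_cong) (auto simp: Q_def indicator_def max_def ennreal_neg)
      also have "\<dots> = ennreal (\<integral>x. indicator {c<..} x * Q x \<partial>lborel)"
        by (rule nn_integral_eq_integral) (use ipc in \<open>auto simp: Q_def\<close>)
      finally show ?thesis .
    qed
    have "(\<integral>x. indicator {c<..} x * P x \<partial>lborel) - (\<integral>x. indicator {c<..} x * Q x \<partial>lborel)
        = (\<integral>x. indicator {c<..} x * P x - indicator {c<..} x * Q x \<partial>lborel)"
      using ipc by (rule Bochner_Integration.integral_diff[symmetric])
    also have "\<dots> = (LINT x:{c<..}|lborel. g0 x)"
      unfolding set_lebesgue_integral_def
      by (intro Bochner_Integration.integral_cong) (auto simp: P_def Q_def indicator_def max_def)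
    also have "\<dots> = 0" using hk_lint(2)[OF mg ig, of "{c<..}"] ic by simp
    finally have "(\<integral>x. indicator {c<..} x * P x \<partial>lborel) = (\<integral>x. indicator {c<..} x * Q x \<partial>lborel)" by simp
    then show "emeasure (density lborel (\<lambda>x. ennreal (g0 x))) {c<..} =
      emeasure (density lborel (\<lambda>x. ennreal (- g0 x))) {c<..}" using 1 2 by simp
    show "emeasure (density lborel (\<lambda>x. ennreal (g0 x))) {c<..} < \<infinity>" using 1 by simp
  qed
  have "density lborel (\<lambda>x. ennreal (g0 x)) = density lborel (\<lambda>x. ennreal (- g0 x))"
    by (rule measure_eqI_lessThan) (use em fin in auto)
  then have "AE x in lborel. ennreal (g0 x) = ennreal (- g0 x)"
    using sigma_finite_measure.density_unique_iff[OF sigma_finite_lborel, of "\<lambda>x. ennreal (g0 x)" "\<lambda>x. ennreal (- g0 x)"] mg by simp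
  then show ?thesis
  proof eventually_elim
    case (elim x) then show ?case
      by (cases "g0 x" "0::real" rule: linorder_cases) (auto simp: ennreal_neg)
  qed
qed

lemma restrict_ab:
  fixes g0 :: "real \<Rightarrow> real"
  assumes out: "\<And>x. x \<notin> {a..b} \<Longrightarrow> g0 x = 0"
  shows "integral S g0 = integral (S \<inter> {a..b}) g0"
proof -
  have g0eq: "g0 = (\<lambda>x. if x \<in> {a..b} then g0 x else 0)" using out by auto
  show ?thesis
    using Henstock_Kurzweil_Integration.integral_restrict_Int[of S "{a..b}" g0] g0eq
    by (metis Int_commute)
qed

lemma ibp_aux:
  fixes g0 :: "real \<Rightarrow> real"
  assumes mg[measurable]: "g0 \<in> borel_measurable borel" and ig: "integrable lborel g0"
    and out: "\<And>x. x \<notin> {a..b} \<Longrightarrow> g0 x = 0" and ab: "a \<le> b"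
  shows "integral {a..b} (\<lambda>x. integral {a..x} g0) = integral {a..b} (\<lambda>t. g0 t * (b - t))"
proof -
  define F where "F x t = (if t \<le> x \<and> x \<le> b then g0 t else 0)" for x t :: real
  have mF: "(\<lambda>(x,t). F x t) \<in> borel_measurable (lborel \<Otimes>\<^sub>M lborel)"
    unfolding F_def by measurable
  define C where "C = (\<integral>t. norm (g0 t) \<partial>lborel)"
  have inner_norm: "(\<integral>t. norm (F x t) \<partial>lborel) = indicator {a..b} x * (\<integral>t. norm (F x t) \<partial>lborel)" for x
  proof (cases "x \<in> {a..b}")
    case False
    then have "F x t = 0" for t using out[of t] by (auto simp: F_def)
    then show ?thesis by simp
  qed simp
  have int2: "integrable lborel (F x)" for x
  proof -
    have "F x = (\<lambda>t. indicator {..x} t * (indicator {..b} x * g0 t))"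
      by (auto simp: F_def indicator_def fun_eq_iff)
    moreover have "integrable lborel (\<lambda>t. indicator {..x} t * (indicator {..b} x * g0 t))"
      using integrable_mult_indicator[of "{..x}" lborel "\<lambda>t. indicator {..b} x * g0 t"] ig by simp
    ultimately show ?thesis by simp
  qed
  have int1: "integrable lborel (\<lambda>x. \<integral>t. norm (F x t) \<partial>lborel)"
  proof (rule Bochner_Integration.integrable_bound[where f="\<lambda>x. indicator {a..b} x * C"])
    show "integrable lborel (\<lambda>x. indicator {a..b} x * C)"
      by (simp add: integrable_indicator_iff emeasure_lborel_Icc_eq)
    show "(\<lambda>x. \<integral>t. norm (F x t) \<partial>lborel) \<in> borel_measurable lborel"
      using mF by measurable
    show "AE x in lborel. norm (\<integral>t. norm (F x t) \<partial>lborel) \<le> norm (indicator {a..b} x * C)"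
    proof (rule AE_I2)
      fix x
      have "(\<integral>t. norm (F x t) \<partial>lborel) \<le> C" unfolding C_def
        using integrable_norm[OF ig] integrable_norm[OF int2[of x]]
        by (intro integral_mono) (auto simp: F_def)
      moreover have "0 \<le> (\<integral>t. norm (F x t) \<partial>lborel)" by simp
      ultimately show "norm (\<integral>t. norm (F x t) \<partial>lborel) \<le> norm (indicator {a..b} x * C)"
        by (subst inner_norm) (auto simp: indicator_def)
    qed
  qed
  have intP: "integrable (lborel \<Otimes>\<^sub>M lborel) (\<lambda>(x,t). F x t)"
    by (rule lborel_pair.Fubini_integrable[OF mF]) (use int1 int2 in auto)
  have fub: "(\<integral>t. (\<integral>x. F x t \<partial>lborel) \<partial>lborel) = (\<integral>x. (\<integral>t. F x t \<partial>lborel) \<partial>lborel)"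
    by (rule lborel_pair.Fubini_integral) (use intP in simp)
  have inner_t: "(\<integral>t. F x t \<partial>lborel) = indicator {a..b} x * integral {a..x} g0" for x
  proof (cases "x \<in> {a..b}")
    case True
    then have "F x = (\<lambda>t. indicator {..x} t *\<^sub>R g0 t)" by (auto simp: F_def indicator_def fun_eq_iff)
    then have "(\<integral>t. F x t \<partial>lborel) = (LINT t:{..x}|lborel. g0 t)"
      by (simp add: set_lebesgue_integral_def)
    also have "\<dots> = integral {..x} g0" using hk_lint(2)[OF mg ig] by simp
    also have "\<dots> = integral ({..x} \<inter> {a..b}) g0" by (rule restrict_ab) (use out in auto)
    also have "{..x} \<inter> {a..b} = {a..x}" using True by auto
    finally show ?thesis using True by simp
  next
    case False
    then have "F x t = 0" for t using out[of t] by (auto simp: F_def)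
    then show ?thesis using False by simp
  qed
  have inner_x: "(\<integral>x. F x t \<partial>lborel) = g0 t * (b - t)" for t
  proof (cases "t \<in> {a..b}")
    case True
    then have "(\<lambda>x. F x t) = (\<lambda>x. indicator {t..b} x * g0 t)" by (auto simp: F_def indicator_def fun_eq_iff)
    then have "(\<integral>x. F x t \<partial>lborel) = (\<integral>x. indicator {t..b} x \<partial>lborel) * g0 t"
      by simp
    also have "\<dots> = (b - t) * g0 t" using True by simp
    finally show ?thesis by simp
  next
    case False
    then have "F x t = 0" for x using out[of t] by (auto simp: F_def)
    then show ?thesis using False out[of t] by simp
  qed
  define U where "U x = integral {a..x} g0" for x
  have intab: "g0 integrable_on {a..b}" using hk_lint[OF mg ig] by simp
  have contU: "continuous_on {a..b} U" unfolding U_def by (rule indefinite_integral_continuous_1[OF intab])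
  have "integral {a..b} U = (LINT x:{a..b}|lborel. U x)"
    using set_borel_integral_eq_integral(2)[OF borel_integrable_atLeastAtMost'[OF contU]] by simp
  also have "\<dots> = (\<integral>x. (\<integral>t. F x t \<partial>lborel) \<partial>lborel)"
    unfolding set_lebesgue_integral_def inner_t U_def by simp
  also have "\<dots> = (\<integral>t. g0 t * (b - t) \<partial>lborel)" using fub inner_x by simp
  also have "\<dots> = (LINT t:{a..b}|lborel. g0 t * (b - t))"
    unfolding set_lebesgue_integral_def
  proof (intro Bochner_Integration.integral_cong refl)
    fix x :: real show "g0 x * (b - x) = indicat_real {a..b} x *\<^sub>R (g0 x * (b - x))"
      using out[of x] by (cases "x \<in> {a..b}") auto
  qed
  also have "\<dots> = integral {a..b} (\<lambda>t. g0 t * (b - t))"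
  proof (rule hk_lint(2))
    show "(\<lambda>t. g0 t * (b - t)) \<in> borel_measurable borel" by measurable
    show "integrable lborel (\<lambda>t. g0 t * (b - t))"
    proof (rule Bochner_Integration.integrable_bound[where f="\<lambda>t. (b - a) * g0 t"])
      show "integrable lborel (\<lambda>t. (b - a) * g0 t)" using ig by simp
      show "(\<lambda>t. g0 t * (b - t)) \<in> borel_measurable lborel" by measurable
      show "AE x in lborel. norm (g0 x * (b - x)) \<le> norm ((b - a) * g0 x)"
      proof (rule AE_I2)
        fix x show "norm (g0 x * (b - x)) \<le> norm ((b - a) * g0 x)"
        proof (cases "x \<in> {a..b}")
          case True then show ?thesis
            by (auto simp: abs_mult mult.commute intro!: mult_left_mono)
        qed (use out in simp)
      qed
    qed
  qed simp
  finally show ?thesis unfolding U_def .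
qed



lemma deriv_W:
  fixes R x :: real
  assumes "\<bar>x\<bar> < R"
  shows "((\<lambda>x. sqrt (R\<^sup>2 - x\<^sup>2)) has_real_derivative (- x / sqrt (R\<^sup>2 - x\<^sup>2))) (at x)"
proof -
  have pos: "0 < R\<^sup>2 - x\<^sup>2" using power_strict_mono[of "\<bar>x\<bar>" R 2] assms by simp
  have d1: "((\<lambda>x::real. R\<^sup>2 - x\<^sup>2) has_real_derivative (-(2*x))) (at x)"
    by (auto intro!: derivative_eq_intros)
  have "((\<lambda>x. sqrt (R\<^sup>2 - x\<^sup>2)) has_real_derivative (inverse (sqrt (R\<^sup>2 - x\<^sup>2)) / 2 * (-(2 * x)))) (at x)"
    using DERIV_chain2[OF DERIV_real_sqrt[OF pos] d1] .
  moreover have "inverse (sqrt (R\<^sup>2 - x\<^sup>2)) / 2 * (-(2 * x)) = - x / sqrt (R\<^sup>2 - x\<^sup>2)"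
    by (simp add: field_simps)
  ultimately show ?thesis by simp
qed

lemma deriv_F:
  fixes R x :: real
  assumes "\<bar>x\<bar> < R"
  shows "((\<lambda>x. (x * sqrt (R\<^sup>2 - x\<^sup>2) + R\<^sup>2 * arcsin (x / R)) / (2 * R)) has_real_derivative (sqrt (R\<^sup>2 - x\<^sup>2) / R)) (at x)"
proof -
  have R: "0 < R" using assms by linarith
  have pos: "0 < R\<^sup>2 - x\<^sup>2" using power_strict_mono[of "\<bar>x\<bar>" R 2] assms by simp
  have xr: "-1 < x / R" "x / R < 1" using assms R by (auto simp: abs_less_iff field_simps)
  have sq: "sqrt (1 - (x / R)\<^sup>2) = sqrt (R\<^sup>2 - x\<^sup>2) / R"
  proof -
    have "1 - (x / R)\<^sup>2 = (R\<^sup>2 - x\<^sup>2) / R\<^sup>2" using R by (simp add: field_simps power2_eq_square)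
    then show ?thesis using R by (simp add: real_sqrt_divide)
  qed
  have d2: "((\<lambda>x. x/R) has_real_derivative 1/R) (at x)" using R by (auto intro!: derivative_eq_intros)
  have da: "((\<lambda>x::real. arcsin (x / R)) has_real_derivative (inverse (sqrt (1 - (x/R)\<^sup>2)) * (1 / R))) (at x)"
    using DERIV_chain2[OF DERIV_arcsin[OF xr] d2] by simp
  have d: "((\<lambda>x. (x * sqrt (R\<^sup>2 - x\<^sup>2) + R\<^sup>2 * arcsin (x / R)) / (2 * R)) has_real_derivative
     ((1 * sqrt (R\<^sup>2 - x\<^sup>2) + (- x / sqrt (R\<^sup>2 - x\<^sup>2)) * x + R\<^sup>2 * (inverse (sqrt (1 - (x/R)\<^sup>2)) * (1 / R))) / (2 * R))) (at x)"
    by (intro DERIV_cdivide DERIV_add DERIV_mult DERIV_cmult DERIV_ident deriv_W[OF assms] da)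
  have "(1 * sqrt (R\<^sup>2 - x\<^sup>2) + (- x / sqrt (R\<^sup>2 - x\<^sup>2)) * x + R\<^sup>2 * (inverse (sqrt (1 - (x/R)\<^sup>2)) * (1 / R))) / (2 * R)
      = sqrt (R\<^sup>2 - x\<^sup>2) / R"
  proof -
    have s: "sqrt (R\<^sup>2 - x\<^sup>2) > 0" using pos by simp
    have ss: "sqrt (R\<^sup>2 - x\<^sup>2) * sqrt (R\<^sup>2 - x\<^sup>2) = R\<^sup>2 - x\<^sup>2" using pos by simp
    show ?thesis unfolding sq using s R ss
      by (simp add: field_simps power2_eq_square)
  qed
  then show ?thesis using d by simp
qed


lemma pw:
  fixes a b v :: real
  assumes "0 < a" "a\<^sup>2 + b\<^sup>2 = 1"
  shows "a + b * v \<le> sqrt (1 + v\<^sup>2)" "a + b * v = sqrt (1 + v\<^sup>2) \<longleftrightarrow> a * v = b"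
proof -
  have key: "1 + v\<^sup>2 - (a + b * v)\<^sup>2 = (a * v - b)\<^sup>2"
    using assms(2) by algebra
  show le: "a + b * v \<le> sqrt (1 + v\<^sup>2)"
  proof (rule real_le_rsqrt)
    have "0 \<le> (a * v - b)\<^sup>2" by simp
    then show "(a + b * v)\<^sup>2 \<le> 1 + v\<^sup>2" using key by linarith
  qed
  show "a + b * v = sqrt (1 + v\<^sup>2) \<longleftrightarrow> a * v = b"
  proof
    assume "a + b * v = sqrt (1 + v\<^sup>2)"
    then have "(a + b * v)\<^sup>2 = 1 + v\<^sup>2" by simp
    then show "a * v = b" using key by simp
  next
    assume h: "a * v = b"
    then have "(a + b * v)\<^sup>2 = 1 + v\<^sup>2" using key by simp
    moreover have "a + b * v = a * (1 + v\<^sup>2)" by (simp add: h[symmetric] algebra_simps power2_eq_square)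
    then have "0 \<le> a + b * v" using assms(1) by simp
    ultimately show "a + b * v = sqrt (1 + v\<^sup>2)" by (metis real_sqrt_unique)
  qed
qed

theorem mainTheorem2:
  fixes \<beta> p :: real and u u' :: "real \<Rightarrow> real"
  assumes "0 < \<beta>" and "\<beta> < 1" and "0 < p"
    and "W11_with_deriv p u u'"
    and "\<forall>x\<in>{-p..p}. u x \<ge> 0"
    and "u (-p) = 0" and "u p = 0"
  defines "L \<equiv> integral {-p..p} (\<lambda>x. sqrt (1 + (u' x)\<^sup>2))"
    and "A \<equiv> integral {-p..p} u"
    and "R \<equiv> p / sqrt (1 - \<beta>\<^sup>2)"
  shows "L \<ge> (arccos \<beta> / sqrt (1 - \<beta>\<^sup>2) + \<beta>) * p + sqrt (1 - \<beta>\<^sup>2) * A / p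
    \<and> (L = (arccos \<beta> / sqrt (1 - \<beta>\<^sup>2) + \<beta>) * p + sqrt (1 - \<beta>\<^sup>2) * A / p
         \<longleftrightarrow> (\<forall>x\<in>{-p..p}. u x = sqrt (R\<^sup>2 - x\<^sup>2) - \<beta> * R))"
proof -
  note b0 = assms(1) and b1 = assms(2) and p0 = assms(3)
  have w11: "u' absolutely_integrable_on {-p..p} \<and> (\<forall>x\<in>{-p..p}. u x = u (-p) + integral {-p..x} u')"
    using assms(4) unfolding W11_with_deriv_def .
  have ai: "u' absolutely_integrable_on {-p..p}" using w11 by (rule conjunct1)
  have ux: "\<forall>x\<in>{-p..p}. u x = u (-p) + integral {-p..x} u'" using w11 by (rule conjunct2)
  define s where "s = sqrt (1 - \<beta>\<^sup>2)"
  have b2: "\<beta>\<^sup>2 < 1" using b0 b1 by (simp add: power_less_one_iff)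
  have s0: "0 < s" using b2 by (simp add: s_def)
  have s2: "s\<^sup>2 = 1 - \<beta>\<^sup>2" using b2 by (simp add: s_def)
  have "s\<^sup>2 < 1" using s2 b0 by simp
  then have s1: "s < 1" using s0 abs_square_less_1[of s] by simp
  have Rs: "R = p / s" by (simp add: R_def s_def)
  have R0: "0 < R" using Rs p0 s0 by simp
  have pRs: "p = R * s" using Rs s0 by simp
  have pR: "p < R" using mult_strict_left_mono[OF s1 R0] pRs by simp
  have WpR: "sqrt (R\<^sup>2 - p\<^sup>2) = \<beta> * R"
  proof -
    have "R\<^sup>2 - p\<^sup>2 = (\<beta> * R)\<^sup>2" using s2 pRs by algebra
    then show ?thesis using b0 R0 by simp
  qed
  obtain g0 N where mg[measurable]: "g0 \<in> borel_measurable borel" and ig: "integrable lborel g0"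
    and nN: "negligible N" and out: "\<And>x. x \<notin> {-p..p} \<Longrightarrow> g0 x = 0"
    and gN: "\<And>x. x \<in> {-p..p} \<Longrightarrow> x \<notin> N \<Longrightarrow> g0 x = u' x"
    using borel_rep[OF ai] by blast
  have intg0: "g0 integrable_on {-p..p}" using hk_lint[OF mg ig] by simp
  have ug: "u x = integral {-p..x} g0" if "x \<in> {-p..p}" for x
  proof -
    have "u x = integral {-p..x} u'" using ux that assms(6) by simp
    also have "\<dots> = integral {-p..x} g0"
      by (rule integral_spike[OF nN]) (use gN that in auto)
    finally show ?thesis .
  qed
  have Lg: "L = integral {-p..p} (\<lambda>x. sqrt (1 + (g0 x)\<^sup>2))"
    unfolding L_def by (rule integral_spike[OF nN]) (use gN in auto)
  define a where "a x = sqrt (R\<^sup>2 - x\<^sup>2) / R" for x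
  define w where "w x = - x / sqrt (R\<^sup>2 - x\<^sup>2)" for x
  define k where "k x = sqrt (1 + (g0 x)\<^sup>2)" for x
  define h where "h x = k x - a x + x * g0 x / R" for x
  have absR: "\<bar>x\<bar> < R" if "x \<in> {-p..p}" for x using that pR by auto
  have pos: "0 < R\<^sup>2 - x\<^sup>2" if "x \<in> {-p..p}" for x
    using power_strict_mono[of "\<bar>x\<bar>" R 2] absR[OF that] by simp
  have apos: "0 < a x" if "x \<in> {-p..p}" for x using pos[OF that] R0 by (simp add: a_def)
  have ab1: "(a x)\<^sup>2 + (- x / R)\<^sup>2 = 1" if "x \<in> {-p..p}" for x
    using pos[OF that] R0 by (simp add: a_def power_divide field_simps)
  have hform: "h x = k x - (a x + (- x / R) * g0 x)" for x by (simp add: h_def)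
  have hnn: "0 \<le> h x" if "x \<in> {-p..p}" for x
    using pw(1)[OF apos[OF that] ab1[OF that], of "g0 x"] by (simp add: hform k_def)
  have h0: "h x = 0 \<longleftrightarrow> g0 x = w x" if "x \<in> {-p..p}" for x
  proof -
    have "h x = 0 \<longleftrightarrow> a x * g0 x = - x / R"
      using pw(2)[OF apos[OF that] ab1[OF that], of "g0 x"] by (auto simp: hform k_def)
    also have "\<dots> \<longleftrightarrow> g0 x = w x"
      using apos[OF that] pos[OF that] R0 by (auto simp: a_def w_def field_simps)
    finally show ?thesis .
  qed
  have int_k: "k integrable_on {-p..p}"
  proof -
    have "integrable lborel (\<lambda>x. k x - 1)"
    proof (rule Bochner_Integration.integrable_bound[where f=g0])
      show "integrable lborel g0" by (rule ig)
      show "(\<lambda>x. k x - 1) \<in> borel_measurable lborel" unfolding k_def by measurable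
      show "AE x in lborel. norm (k x - 1) \<le> norm (g0 x)"
      proof (rule AE_I2)
        fix x
        have "1 \<le> k x" unfolding k_def by simp
        moreover have "k x \<le> 1 + \<bar>g0 x\<bar>" unfolding k_def
        proof (rule real_le_lsqrt)
          show "1 + (g0 x)\<^sup>2 \<le> (1 + \<bar>g0 x\<bar>)\<^sup>2" by (simp add: power2_sum)
        qed auto
        ultimately show "norm (k x - 1) \<le> norm (g0 x)" by simp
      qed
    qed
    then have "(\<lambda>x. k x - 1) integrable_on {-p..p}" using hk_lint(3)[of "\<lambda>x. k x - 1"] unfolding k_def by simp
    then have "(\<lambda>x. (k x - 1) + 1) integrable_on {-p..p}" by (intro integrable_add) auto
    then show ?thesis by simp
  qed
  have conta: "continuous_on {-p..p} a"
    unfolding a_def by (intro continuous_intros) (use R0 in auto)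
  have int_a: "a integrable_on {-p..p}" by (rule integrable_continuous_interval[OF conta])
  have ixg: "integrable lborel (\<lambda>x. x * g0 x)"
  proof (rule Bochner_Integration.integrable_bound[where f="\<lambda>x. p * g0 x"])
    show "integrable lborel (\<lambda>x. p * g0 x)" using ig by simp
    show "(\<lambda>x. x * g0 x) \<in> borel_measurable lborel" by measurable
    show "AE x in lborel. norm (x * g0 x) \<le> norm (p * g0 x)"
    proof (rule AE_I2)
      fix x show "norm (x * g0 x) \<le> norm (p * g0 x)"
      proof (cases "x \<in> {-p..p}")
        case True then show ?thesis using p0
          by (auto simp: abs_mult intro!: mult_right_mono)
      qed (use out in simp)
    qed
  qed
  have int_xg: "(\<lambda>x. x * g0 x) integrable_on {-p..p}" using hk_lint(3)[OF _ ixg] by simp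
  have int_xgR: "(\<lambda>x. x * g0 x / R) integrable_on {-p..p}"
    using integrable_on_cmult_right[OF int_xg, of "1/R"] by simp
  have int_h: "h integrable_on {-p..p}"
    unfolding h_def by (intro integrable_add Henstock_Kurzweil_Integration.integrable_diff int_k int_a int_xgR)
  have IK: "integral {-p..p} (\<lambda>x. x * g0 x) = - A"
  proof -
    have "integral {-p..p} (\<lambda>x. integral {-p..x} g0) = integral {-p..p} (\<lambda>t. g0 t * (p - t))"
      by (rule ibp_aux[OF mg ig out]) (use p0 in auto)
    moreover have "integral {-p..p} (\<lambda>x. integral {-p..x} g0) = A"
      unfolding A_def by (rule integral_cong) (use ug in auto)
    moreover have "integral {-p..p} (\<lambda>t. g0 t * (p - t)) = p * integral {-p..p} g0 - integral {-p..p} (\<lambda>t. t * g0 t)"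
    proof -
      have "integral {-p..p} (\<lambda>t. g0 t * (p - t)) = integral {-p..p} (\<lambda>t. p * g0 t - t * g0 t)"
        by (rule integral_cong) (simp add: algebra_simps)
      also have "\<dots> = integral {-p..p} (\<lambda>t. p * g0 t) - integral {-p..p} (\<lambda>t. t * g0 t)"
        by (rule Henstock_Kurzweil_Integration.integral_diff) (use intg0 int_xg integrable_on_cmult_left[OF intg0, of p] in auto)
      finally show ?thesis by simp
    qed
    moreover have "integral {-p..p} g0 = 0" using ug[of p] assms(7) p0 by simp
    ultimately show ?thesis by simp
  qed
  define F where "F x = (x * sqrt (R\<^sup>2 - x\<^sup>2) + R\<^sup>2 * arcsin (x / R)) / (2 * R)" for x
  have Ia: "integral {-p..p} a = (arccos \<beta> / s + \<beta>) * p"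
  proof -
    have "(a has_integral (F p - F (-p))) {-p..p}"
    proof (rule fundamental_theorem_of_calculus)
      fix x assume x: "x \<in> {-p..p}"
      show "(F has_vector_derivative a x) (at x within {-p..p})"
        using deriv_F[OF absR[OF x]] unfolding F_def a_def
        by (simp add: has_real_derivative_iff_has_vector_derivative[symmetric] has_field_derivative_at_within)
    qed (use p0 in auto)
    then have "integral {-p..p} a = F p - F (-p)" by (rule integral_unique)
    also have "\<dots> = p * \<beta> + R * arcsin s"
    proof -
      have ps: "p / R = s" using pRs R0 by simp
      have "arcsin (- s) = - arcsin s" using s0 s1 by (intro arcsin_minus) auto
      then show ?thesis unfolding F_def using WpR ps R0
        by (simp add: field_simps power2_eq_square)
    qed
    also have "arcsin s = arccos \<beta>" unfolding s_def using b0 b1 by (simp add: arccos_arcsin_sqrt_pos)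
    finally show ?thesis using Rs s0 by (simp add: field_simps)
  qed
  have Lsplit: "L = (arccos \<beta> / sqrt (1 - \<beta>\<^sup>2) + \<beta>) * p + sqrt (1 - \<beta>\<^sup>2) * A / p + integral {-p..p} h"
  proof -
    have "integral {-p..p} h = integral {-p..p} k - integral {-p..p} a + integral {-p..p} (\<lambda>x. x * g0 x / R)"
      unfolding h_def
      by (simp add: integrable_add Henstock_Kurzweil_Integration.integral_add Henstock_Kurzweil_Integration.integral_diff Henstock_Kurzweil_Integration.integrable_diff int_k int_a int_xgR)
    also have "integral {-p..p} (\<lambda>x. x * g0 x / R) = - A / R"
      using IK by simp
    finally have "integral {-p..p} h = L - (arccos \<beta> / s + \<beta>) * p - A / R"
      using Ia Lg by (simp add: k_def)
    moreover have "A / R = s * A / p" using pRs R0 s0 by (simp add: field_simps)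
    ultimately show ?thesis by (simp add: s_def)
  qed
  have Ih: "0 \<le> integral {-p..p} h" by (rule integral_nonneg[OF int_h hnn])
  have contw: "continuous_on {-p..p} w"
    unfolding w_def by (intro continuous_intros) (use pos in fastforce)
  have intW: "integral {-p..x} w = sqrt (R\<^sup>2 - x\<^sup>2) - sqrt (R\<^sup>2 - p\<^sup>2)" if x: "x \<in> {-p..p}" for x
  proof -
    have "(w has_integral (sqrt (R\<^sup>2 - x\<^sup>2) - sqrt (R\<^sup>2 - (-p)\<^sup>2))) {-p..x}"
    proof (rule fundamental_theorem_of_calculus[where f="\<lambda>x. sqrt (R\<^sup>2 - x\<^sup>2)"])
      fix t assume t: "t \<in> {-p..x}"
      then have "t \<in> {-p..p}" using x by auto
      then show "((\<lambda>x. sqrt (R\<^sup>2 - x\<^sup>2)) has_vector_derivative w t) (at t within {-p..x})"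
        using deriv_W[OF absR] unfolding w_def
        by (simp add: has_real_derivative_iff_has_vector_derivative[symmetric] has_field_derivative_at_within)
    qed (use x in auto)
    then show ?thesis by (simp add: integral_unique)
  qed
  have absh: "h absolutely_integrable_on {-p..p}" by (rule nonnegative_absolutely_integrable_1[OF int_h hnn])
  have ih_ae: "integral {-p..p} h = 0 \<longleftrightarrow> (AE x in lebesgue. x \<in> {-p..p} \<longrightarrow> g0 x = w x)"
  proof -
    have "integral {-p..p} h = (LINT x:{-p..p}|lebesgue. h x)"
      using set_lebesgue_integral_eq_integral(2)[OF absh] by simp
    also have "\<dots> = (\<integral>x. indicator {-p..p} x *\<^sub>R h x \<partial>lebesgue)" by (simp add: set_lebesgue_integral_def)
    finally have e: "integral {-p..p} h = (\<integral>x. indicator {-p..p} x *\<^sub>R h x \<partial>lebesgue)" .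
    have "(\<integral>x. indicator {-p..p} x *\<^sub>R h x \<partial>lebesgue) = 0 \<longleftrightarrow> (AE x in lebesgue. indicator {-p..p} x *\<^sub>R h x = 0)"
    proof (rule integral_nonneg_eq_0_iff_AE)
      show "integrable lebesgue (\<lambda>x. indicat_real {-p..p} x *\<^sub>R h x)" using absh by (simp add: set_integrable_def)
      show "AE x in lebesgue. 0 \<le> indicat_real {- p..p} x *\<^sub>R h x"
        by (rule AE_I2) (use hnn in \<open>auto simp: indicator_def\<close>)
    qed
    also have "\<dots> \<longleftrightarrow> (AE x in lebesgue. x \<in> {-p..p} \<longrightarrow> g0 x = w x)"
      by (intro AE_cong) (use h0 in \<open>auto simp: indicator_def\<close>)
    finally show ?thesis using e by simp
  qed
  have ae_u: "(AE x in lebesgue. x \<in> {-p..p} \<longrightarrow> g0 x = w x) \<longleftrightarrow> (\<forall>x\<in>{-p..p}. u x = sqrt (R\<^sup>2 - x\<^sup>2) - \<beta> * R)"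
  proof
    assume ae: "AE x in lebesgue. x \<in> {-p..p} \<longrightarrow> g0 x = w x"
    obtain N2 where N2: "\<And>x. x \<in> space lebesgue - N2 \<Longrightarrow> x \<in> {-p..p} \<longrightarrow> g0 x = w x" "N2 \<in> null_sets lebesgue"
      using AE_E3[OF ae] by blast
    have nN2: "negligible N2" using N2(2) negligible_iff_null_sets by blast
    show "\<forall>x\<in>{-p..p}. u x = sqrt (R\<^sup>2 - x\<^sup>2) - \<beta> * R"
    proof
      fix x assume x: "x \<in> {-p..p}"
      have "u x = integral {-p..x} g0" by (rule ug[OF x])
      also have "\<dots> = integral {-p..x} w"
        by (rule integral_spike[OF nN2]) (use N2(1) x in auto)
      also have "\<dots> = sqrt (R\<^sup>2 - x\<^sup>2) - sqrt (R\<^sup>2 - p\<^sup>2)" by (rule intW[OF x])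
      finally show "u x = sqrt (R\<^sup>2 - x\<^sup>2) - \<beta> * R" using WpR by simp
    qed
  next
    assume H: "\<forall>x\<in>{-p..p}. u x = sqrt (R\<^sup>2 - x\<^sup>2) - \<beta> * R"
    define d where "d x = indicator {-p..p} x * (g0 x - w x)" for x
    have md: "d \<in> borel_measurable borel" unfolding d_def w_def by measurable
    have id: "integrable lborel d"
    proof -
      have "integrable lborel (\<lambda>x. g0 x * indicator {-p..p} x)"
        using ig by (rule integrable_real_mult_indicator[rotated]) simp
      moreover have "integrable lborel (\<lambda>x. indicator {-p..p} x *\<^sub>R w x)"
        using borel_integrable_atLeastAtMost'[OF contw] by (simp add: set_integrable_def)
      ultimately have "integrable lborel (\<lambda>x. g0 x * indicator {-p..p} x - indicator {-p..p} x *\<^sub>R w x)"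
        by (rule Bochner_Integration.integrable_diff)
      moreover have "(\<lambda>x. g0 x * indicator {-p..p} x - indicator {-p..p} x *\<^sub>R w x) = d"
        by (auto simp: d_def fun_eq_iff algebra_simps)
      ultimately show ?thesis by simp
    qed
    have outd: "d x = 0" if "x \<notin> {-p..p}" for x using that by (simp add: d_def)
    have d0: "integral {-p..x} d = 0" if x: "x \<in> {-p..p}" for x
    proof -
      have "integral {-p..x} d = integral {-p..x} (\<lambda>t. g0 t - w t)"
        by (rule integral_cong) (use x in \<open>auto simp: d_def\<close>)
      also have "\<dots> = integral {-p..x} g0 - integral {-p..x} w"
        by (rule Henstock_Kurzweil_Integration.integral_diff)
          (use x integrable_on_subinterval[OF intg0, of "-p" x]
             integrable_on_subinterval[OF integrable_continuous_interval[OF contw], of "-p" x] in auto)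
      also have "\<dots> = 0" using ug[OF x] H x intW[OF x] WpR by simp
      finally show ?thesis .
    qed
    have "AE x in lborel. d x = 0"
      by (rule zero_from_intervals[OF md id outd]) (use p0 d0 in auto)
    then have "AE x in lebesgue. d x = 0" by (rule AE_completion)
    then show "AE x in lebesgue. x \<in> {-p..p} \<longrightarrow> g0 x = w x"
      by eventually_elim (auto simp: d_def)
  qed
  show ?thesis using Lsplit Ih ih_ae ae_u by auto
qed

end
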